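(* Let $P$ (messages), $K$ (keys) and $C$ (ciphertexts) be finite sets. Let $E \subseteq (P \times K) \times C$ be a relation (encryption) and let $(D_c)_{c \in C}$ be a family of relations $D_c \subseteq K \times P$ (decryption, controlled by the public ciphertext $c$). Suppose the following correctness condition holds: for all $p, p' \in P$ and all $c \in C$, $$\big(\exists k \in K:\ ((p,k),c) \in E \text{ and } (k,p') \in D_c\big) \iff p' = p.$$ Suppose moreover that $E$ satisfies the security property: for every $p \in P$, $\{c \in C : \exists k \in K,\ ((p,k),c) \in E\} = C$. If $E$ is invertible as a relation (i.e. $E$ is the graph of a bijection $P \times K \to C$), then $P$ has at most one element.
   Context: This is the concrete form, in the bicategory of matrices of relations ($\mathbf{2Rel}$), of a classical encrypted communication protocol using a one-time pad: the key is generated nondeterministically as the relation $\{(k,k) : k \in K\}$ from the one-element set to $K \times K$ (both parties receive the same key); Alice encrypts her private message $p$ with her key copy via $E$ producing public ciphertext $c$; Bob applies $D_c$ to his key copy to obtain a private message. The correctness condition says that the whole protocol equals the process which produces an arbitrary (nondeterministically chosen) public ciphertext and delivers $p$ unchanged to Bob. The security property says that encrypting with one key copy and discarding the other copy is the same as discarding the message and producing an arbitrary ciphertext. Invertibility of a 2-cell here means invertibility of the relation under relational composition, which for relations between finite sets means it is the graph of a bijection. *)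

theory Defs
  imports Main
begin

definition rel_invertible :: "'a set \<Rightarrow> 'b set \<Rightarrow> ('a \<times> 'b) set \<Rightarrow> bool" where
  "rel_invertible A B E \<longleftrightarrow>
     (\<exists>R. R \<subseteq> B \<times> A \<and> E O R = Id_on A \<and> R O E = Id_on B)"

end

theory Submission
  imports Defs
begin

theorem theorem5:
  fixes P :: "'p set" and K :: "'k set" and C :: "'c set"
    and E :: "(('p \<times> 'k) \<times> 'c) set"
    and D :: "'c \<Rightarrow> ('k \<times> 'p) set"
  assumes finP: "finite P" and finK: "finite K" and finC: "finite C"
    and K_ne: "K \<noteq> {}"
    and E_rel: "E \<subseteq> (P \<times> K) \<times> C"
    and D_rel: "\<And>c. c \<in> C \<Longrightarrow> D c \<subseteq> K \<times> P"
    and correct: "\<And>p p' c. p \<in> P \<Longrightarrow> p' \<in> P \<Longrightarrow> c \<in> C \<Longrightarrow>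
         (\<exists>k\<in>K. ((p, k), c) \<in> E \<and> (k, p') \<in> D c) \<longleftrightarrow> p' = p"
    and secure: "\<And>p. p \<in> P \<Longrightarrow> {c \<in> C. \<exists>k\<in>K. ((p, k), c) \<in> E} = C"
    and inv: "rel_invertible (P \<times> K) C E"
  shows "card P \<le> 1"
proof (cases "P = {}")
  case True then show ?thesis by simp
next
  case False
  then obtain p1 where p1: "p1 \<in> P" by blast
  from inv obtain R where R: "R \<subseteq> C \<times> (P \<times> K)" "E O R = Id_on (P \<times> K)" "R O E = Id_on C"
    unfolding rel_invertible_def by blast
  have fun_: "c = c'" if "(x,c) \<in> E" "(x,c') \<in> E" for x c c'
  proof -
    have x: "x \<in> P \<times> K" using that E_rel by blast
    then have "(x,x) \<in> E O R" using R(2) by auto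
    then obtain c0 where c0: "(x,c0) \<in> E" "(c0,x) \<in> R" by blast
    have "(c0,c) \<in> R O E" "(c0,c') \<in> R O E" using c0 that by auto
    then show ?thesis using R(3) by auto
  qed
  have inj_: "x = x'" if "(x,c) \<in> E" "(x',c) \<in> E" for x x' c
  proof -
    have "c \<in> C" using that E_rel by blast
    then have "(c,c) \<in> R O E" using R(3) by auto
    then obtain y where y: "(c,y) \<in> R" "(y,c) \<in> E" by blast
    have "(x,y) \<in> E O R" "(x',y) \<in> E O R" using y that by auto
    then show ?thesis using R(2) by auto
  qed
  define g where "g x = (SOME c. (x,c) \<in> E)" for x
  have gE: "(x, g x) \<in> E" if "x \<in> P \<times> K" for x
  proof -
    have "(x,x) \<in> E O R" using R(2) that by auto
    then have "\<exists>c. (x,c) \<in> E" by blast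
    then show ?thesis unfolding g_def by (rule someI_ex)
  qed
  have "inj_on g (P \<times> K)"
    by (rule inj_onI) (metis gE inj_)
  moreover have "g ` (P \<times> K) \<subseteq> C" using gE E_rel by blast
  ultimately have c1: "card (P \<times> K) \<le> card C"
    using card_inj_on_le finC by blast
  have "C \<subseteq> g ` ({p1} \<times> K)"
  proof
    fix c assume c: "c \<in> C"
    then obtain k where k: "k \<in> K" "((p1,k),c) \<in> E" using secure[OF p1] by blast
    then have "g (p1,k) = c" using fun_ gE p1 by blast
    then show "c \<in> g ` ({p1} \<times> K)" using k by force
  qed
  then have "card C \<le> card ({p1} \<times> K)"
  proof -
    have f: "finite ({p1} \<times> K)" using finK by simp
    have "card C \<le> card (g ` ({p1} \<times> K))" using card_mono[OF finite_imageI[OF f]] \<open>C \<subseteq> _\<close> by blast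
    also have "\<dots> \<le> card ({p1} \<times> K)" using card_image_le[OF f] .
    finally show ?thesis .
  qed
  also have "\<dots> = card K" by (simp add: card_cartesian_product)
  finally have ck: "card C \<le> card K" .
  have "card P * card K \<le> card K" using c1 ck unfolding card_cartesian_product by linarith
  moreover have "card K > 0" using finK K_ne by (simp add: card_gt_0_iff)
  ultimately show ?thesis
    by (metis mult_le_cancel2 mult_1 nat_mult_le_cancel_disj)
qed

end
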